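(* Let $L,h,\beta>0$. There exists a solution $\hat{\mathcal Z}:\mathbb{R}\to\mathbb{R}^2$ of $\ddot z=-\nabla V_\beta(z)$ with energy $\frac12|\dot z|^2+V_\beta(z)=h$ such that: (i) $\hat{\mathcal Z}(0),\hat{\mathcal Z}(T)\in\ell$ for some $T>0$ and $\hat{\mathcal Z}(t)\in\mathcal P$ for all $t\in(0,T)$; (ii) the angle between $\dot{\hat{\mathcal Z}}(0)$ and $(1,0)$ is less than $\pi/2$, and the angle between $(-1,0)$ and $\dot{\hat{\mathcal Z}}(T)$ is greater than $\pi/2$; (iii) $\operatorname{Ind}(\hat{\mathcal Z}|_{[0,T]})=1$.
   Context: $V_\beta(z)=-\frac1{|z|}-\frac{\beta}{|z|^2}$ on $\mathbb{R}^2\setminus\{0\}$; $\ell=\{(x,y):y=-L\}$; $\mathcal P=\{(x,y):y>-L\}$. Winding number: for $u:[a,b]\to\overline{\mathcal P}$ with $u(a),u(b)\in\ell$ and $u(s)\in\mathcal P\setminus\{0\}$ for all $s\in(a,b)$, let $\gamma_u$ be the closed curve obtained by concatenating $u$ with the oriented segment from $u(b)$ to $u(a)$; then $\operatorname{Ind}(u)=\frac{1}{2\pi i}\oint_{\gamma_u}\frac{dz}{z}\in\mathbb{Z}$ (the winding number of $\gamma_u$ around the origin, identifying $\mathbb{R}^2$ with $\mathbb{C}$). *)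

theory Defs
  imports "HOL-Complex_Analysis.Complex_Analysis"
begin

text \<open>The plane R^2 is identified with the complex numbers C (x + i y).\<close>

definition V_beta :: "real \<Rightarrow> complex \<Rightarrow> real" where
  "V_beta \<beta> z = - 1 / cmod z - \<beta> / (cmod z)\<^sup>2"

definition line_ell :: "real \<Rightarrow> complex set" where
  "line_ell L = {z. Im z = - L}"

definition halfplane_P :: "real \<Rightarrow> complex set" where
  "halfplane_P L = {z. Im z > - L}"

definition vec_angle :: "complex \<Rightarrow> complex \<Rightarrow> real" where
  "vec_angle x y = arccos ((x \<bullet> y) / (norm x * norm y))"

definition Ind :: "(real \<Rightarrow> complex) \<Rightarrow> real \<Rightarrow> real \<Rightarrow> complex" where
  "Ind u a b = winding_number
      ((\<lambda>s. u (a + (b - a) * s)) +++ linepath (u b) (u a)) 0"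

end

theory Submission imports Defs
begin


lemma polar_ode:
  fixes r rho th :: "real \<Rightarrow> real" and c \<beta> :: real
  assumes rpos: "\<And>t. r t > 0"
   and dr: "\<And>t. (r has_real_derivative rho t) (at t)"
   and drho: "\<And>t. (rho has_real_derivative ((c^2 - 2*\<beta>)/r t^3 - 1/r t^2)) (at t)"
   and dth: "\<And>t. (th has_real_derivative (c / r t^2)) (at t)"
  shows "((\<lambda>t. \<i> * of_real (r t) * (of_real (cos (th t)) + \<i> * of_real (sin (th t))))
      has_vector_derivative
      (\<i> * (of_real (rho t) + \<i> * of_real (c / r t)) * (of_real (cos (th t)) + \<i> * of_real (sin (th t))))) (at t)"
   "((\<lambda>t. \<i> * (of_real (rho t) + \<i> * of_real (c / r t)) * (of_real (cos (th t)) + \<i> * of_real (sin (th t))))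
      has_vector_derivative
      (- \<i> * of_real (1/r t^2 + 2*\<beta>/r t^3) * (of_real (cos (th t)) + \<i> * of_real (sin (th t))))) (at t)"
proof -
  have rt: "r t \<noteq> 0" using rpos[of t] by simp
  show "((\<lambda>t. \<i> * of_real (r t) * (of_real (cos (th t)) + \<i> * of_real (sin (th t))))
      has_vector_derivative
      (\<i> * (of_real (rho t) + \<i> * of_real (c / r t)) * (of_real (cos (th t)) + \<i> * of_real (sin (th t))))) (at t)"
    apply (rule derivative_eq_intros dr dth refl has_vector_derivative_of_real)+
    using rt by (simp add: complex_eq_iff field_simps power2_eq_square)
  show "((\<lambda>t. \<i> * (of_real (rho t) + \<i> * of_real (c / r t)) * (of_real (cos (th t)) + \<i> * of_real (sin (th t))))
      has_vector_derivative
      (- \<i> * of_real (1/r t^2 + 2*\<beta>/r t^3) * (of_real (cos (th t)) + \<i> * of_real (sin (th t))))) (at t)"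
    apply (rule derivative_eq_intros dr drho dth refl rt has_vector_derivative_of_real)+
    using rt by (simp add: complex_eq_iff field_simps power2_eq_square power3_eq_cube)
qed



lemma V_deriv:
  fixes z :: complex and \<beta> :: real
  assumes z: "z \<noteq> 0"
  shows "(V_beta \<beta> has_derivative (\<lambda>v. (of_real (1/norm z^3 + 2*\<beta>/norm z^4) * z) \<bullet> v)) (at z)"
proof -
  have n: "norm z \<noteq> 0" using z by simp
  have N: "(norm has_derivative (\<lambda>v. v \<bullet> sgn z)) (at z)"
    using has_derivative_norm[OF z] .
  have "((\<lambda>z. - 1 / cmod z - \<beta> / (cmod z)\<^sup>2) has_derivative (\<lambda>v. (of_real (1/norm z^3 + 2*\<beta>/norm z^4) * z) \<bullet> v)) (at z)"
    apply (rule has_derivative_eq_rhs)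
     apply (rule derivative_intros N n z | simp add: n)+
    apply (rule ext)
    using n by (simp add: sgn_div_norm inner_complex_def field_simps eval_nat_numeral)
  then show ?thesis unfolding V_beta_def[abs_def] .
qed



lemma kepler_time:
  fixes A e :: real and tau :: "real \<Rightarrow> real"
  assumes A: "A > 0" and e: "e > 1"
    and tau_def: "tau = (\<lambda>s. A * (e * sinh s - s))"
  shows "strict_mono tau" "surj tau"
    "\<And>s. (tau has_real_derivative A * (e * cosh s - 1)) (at s)"
    "\<And>y. ((inv tau) has_real_derivative 1 / (A * (e * cosh (inv tau y) - 1))) (at y)"
    "\<And>y. tau (inv tau y) = y" "\<And>s. inv tau (tau s) = s"
    "\<And>s. tau (- s) = - tau s"
proof -
  have D: "(tau has_real_derivative A * (e * cosh s - 1)) (at s)" for s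
    unfolding tau_def by (rule derivative_eq_intros refl)+ simp
  then show "\<And>s. (tau has_real_derivative A * (e * cosh s - 1)) (at s)" .
  have pos: "A * (e * cosh s - 1) > 0" for s
  proof -
    have "e * 1 \<le> e * cosh s" by (rule mult_left_mono[OF cosh_real_ge_1]) (use e in simp)
    then have "1 < e * cosh s" using e by linarith
    then show ?thesis using A by simp
  qed
  show sm: "strict_mono tau"
    by (rule strict_monoI, rule DERIV_pos_imp_increasing) (use D pos in blast)+
  show odd: "\<And>s. tau (- s) = - tau s" unfolding tau_def by (simp add: algebra_simps)
  have ge: "tau s \<ge> A * (e - 1) * s" if "s \<ge> 0" for s
  proof -
    have "(\<lambda>s. sinh s - s) 0 \<le> (\<lambda>s. sinh s - s) s"
      by (rule DERIV_nonneg_imp_nondecreasing[OF that])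
        (auto intro!: exI derivative_eq_intros simp: cosh_real_ge_1)
    then have "sinh s \<ge> s" by simp
    then have "e * sinh s \<ge> e * s" using e by (intro mult_left_mono) auto
    then show ?thesis unfolding tau_def using A by (simp add: algebra_simps)
  qed
  have cont: "isCont tau x" for x using D by (rule DERIV_isCont)
  show surj: "surj tau"
  proof (rule surjI[where f="\<lambda>y. SOME x. tau x = y"], rule someI_ex)
    fix y
    define M where "M = \<bar>y\<bar> / (A * (e - 1))"
    have M: "M \<ge> 0" using A e unfolding M_def by simp
    have "tau M \<ge> \<bar>y\<bar>" using ge[OF M] A e unfolding M_def by simp
    moreover have "tau (-M) \<le> - \<bar>y\<bar>" using \<open>tau M \<ge> \<bar>y\<bar>\<close> odd by simp
    ultimately obtain x where "tau x = y"
      using IVT[of tau "-M" y M] M cont by force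
    then show "\<exists>x. tau x = y" by blast
  qed
  have inj: "inj tau" using sm by (rule strict_mono_imp_inj_on)
  show tinv: "\<And>y. tau (inv tau y) = y" using surj by (simp add: surj_f_inv_f)
  show itau: "\<And>s. inv tau (tau s) = s" using inj by simp
  fix y
  have ic: "isCont (inv tau) y"
    using isCont_inverse_function[where f=tau and g="inv tau" and d=1 and x="inv tau y"] itau cont tinv[of y] by simp
  have "((inv tau) has_real_derivative inverse (A * (e * cosh (inv tau y) - 1))) (at y)"
    by (rule DERIV_inverse_function[where f=tau and g="inv tau" and x=y and a="y - 1" and b="y + 1"])
       (use D pos[of "inv tau y"] tinv ic in \<open>auto simp: less_imp_neq[symmetric]\<close>)
  then show "((inv tau) has_real_derivative 1 / (A * (e * cosh (inv tau y) - 1))) (at y)"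
    by (simp add: divide_inverse)
qed



locale orbit =
  fixes a sa e k c m \<beta> h :: real
  assumes a: "a > 0" and sa: "sa > 0" "sa^2 = a" and e: "e > 1" and k: "k > 0" "k^2 * (e - 1) = e + 1"
    and c: "c > 0" and m: "m * k * (e - 1) * sa = 2 * c" and cb: "c^2 - 2 * \<beta> = a * (e^2 - 1)"
    and h: "2 * h * a = 1"
begin

definition R where "R s = a * (e * cosh s - 1)"
definition Rho where "Rho s = sa * e * sinh s / R s"
definition Th where "Th s = m * arctan (k * sinh s / (cosh s + 1))"

lemma ecosh: "e * cosh s > 1"
proof -
  have "e * 1 \<le> e * cosh s" by (rule mult_left_mono[OF cosh_real_ge_1]) (use e in simp)
  then show ?thesis using e by linarith
qed

lemma Rpos: "R s > 0" unfolding R_def using a ecosh[of s] by simp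

lemma Rnz: "R s \<noteq> 0" using Rpos[of s] by simp

lemma R_deriv: "(R has_real_derivative a * e * sinh s) (at s)"
  unfolding R_def[abs_def] by (rule derivative_eq_intros refl)+ simp

lemma Rho_deriv: "(Rho has_real_derivative
   (sa * e * cosh s * R s - sa * e * sinh s * (a * e * sinh s)) / (R s)^2) (at s)"
  unfolding Rho_def[abs_def]
  apply (rule derivative_eq_intros refl R_deriv Rnz)+
  by (simp add: power2_eq_square)

lemma Th_deriv: "(Th has_real_derivative c * sa / R s) (at s)"
proof -
  have cp: "cosh s + 1 \<noteq> 0" using cosh_real_ge_1[of s] by linarith
  have "(Th has_real_derivative
     m * ((k * cosh s * (cosh s + 1) - k * sinh s * sinh s) / (cosh s + 1)^2 / (1 + (k * sinh s / (cosh s + 1))^2))) (at s)"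
    unfolding Th_def[abs_def]
    apply (rule derivative_eq_intros refl cp)+
    using cp by (simp add: power2_eq_square divide_inverse)
  moreover have "m * ((k * cosh s * (cosh s + 1) - k * sinh s * sinh s) / (cosh s + 1)^2 / (1 + (k * sinh s / (cosh s + 1))^2))
     = c * sa / R s"
  proof -
    have s2: "sinh s ^ 2 = (cosh s - 1) * (cosh s + 1)" using cosh_square_eq[of s] by (simp add: algebra_simps power2_eq_square)
    have hp: "cosh s * cosh s - sinh s * sinh s = 1" using cosh_square_eq[of s] by (simp add: power2_eq_square)
    have "k * cosh s * (cosh s + 1) - k * sinh s * sinh s = k * (cosh s * cosh s - sinh s * sinh s) + k * cosh s"
      by (simp add: algebra_simps)
    then have n1: "k * cosh s * (cosh s + 1) - k * sinh s * sinh s = k * (cosh s + 1)"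
      unfolding hp by (simp add: algebra_simps)
    have n2: "(cosh s + 1)^2 * (1 + (k * sinh s / (cosh s + 1))^2) = (cosh s + 1) * ((cosh s + 1) + k^2 * (cosh s - 1))"
    proof -
      have "(cosh s + 1)^2 * (1 + (k * sinh s / (cosh s + 1))^2) = (cosh s + 1)^2 + k^2 * sinh s^2"
        using cp by (simp add: power_divide field_simps)
      also have "\<dots> = (cosh s + 1) * ((cosh s + 1) + k^2 * (cosh s - 1))"
        unfolding s2 by (simp add: algebra_simps power2_eq_square)
      finally show ?thesis .
    qed
    have n3: "(e - 1) * ((cosh s + 1) + k^2 * (cosh s - 1)) = 2 * (e * cosh s - 1)"
      using k(2) by (simp add: algebra_simps)
    have pos1: "(cosh s + 1) + k^2 * (cosh s - 1) > 0"
      using cosh_real_ge_1[of s] by (smt (verit) mult_nonneg_nonneg zero_le_power2)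
    have "m * ((k * cosh s * (cosh s + 1) - k * sinh s * sinh s) / (cosh s + 1)^2 / (1 + (k * sinh s / (cosh s + 1))^2))
       = m * (k * (cosh s + 1) / ((cosh s + 1)^2 * (1 + (k * sinh s / (cosh s + 1))^2)))"
      by (simp add: n1 divide_divide_eq_left)
    also have "\<dots> = m * k / ((cosh s + 1) + k^2 * (cosh s - 1))"
      unfolding n2 using cp by simp
    also have "\<dots> = m * k * (e - 1) / ((e - 1) * ((cosh s + 1) + k^2 * (cosh s - 1)))"
      using e by simp
    also have "\<dots> = m * k * (e - 1) / (2 * (e * cosh s - 1))"
      by (simp only: n3)
    also have "\<dots> = m * k * (e - 1) * sa / (sa * 2 * (e * cosh s - 1))"
      using sa by simp
    also have "\<dots> = 2 * c / (sa * 2 * (e * cosh s - 1))"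
      by (simp only: m)
    also have "\<dots> = c * sa / R s"
      unfolding R_def using sa ecosh[of s] by (simp add: field_simps power2_eq_square flip: sa(2))
    finally show ?thesis .
  qed
  ultimately show ?thesis by simp
qed

lemma id1: "a * e * sinh s * (1 / (sa * R s)) = Rho s"
  unfolding Rho_def using sa Rpos[of s] by (simp add: field_simps power2_eq_square flip: sa(2))

lemma id2: "(sa * e * cosh s * R s - sa * e * sinh s * (a * e * sinh s)) / (R s)^2 * (1 / (sa * R s))
   = (c^2 - 2*\<beta>)/R s^3 - 1/R s^2"
proof -
  have key: "e * cosh s * R s - a * e^2 * sinh s ^ 2 = a * (e^2 - 1) - R s"
    unfolding R_def using cosh_square_eq[of s] by (simp add: algebra_simps power2_eq_square)
  have "(sa * e * cosh s * R s - sa * e * sinh s * (a * e * sinh s)) / (R s)^2 * (1 / (sa * R s))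
      = (e * cosh s * R s - a * e^2 * sinh s ^ 2) / R s ^ 3"
    using sa Rpos[of s] by (simp add: field_simps power2_eq_square power3_eq_cube)
  also have "\<dots> = (a * (e^2 - 1) - R s) / R s ^ 3" by (simp only: key)
  also have "\<dots> = (c^2 - 2*\<beta>)/R s^3 - 1/R s^2"
    unfolding cb using Rpos[of s] by (simp add: field_simps power2_eq_square power3_eq_cube)
  finally show ?thesis .
qed

lemma id3: "c * sa / R s * (1 / (sa * R s)) = c / R s^2"
  using sa Rpos[of s] by (simp add: field_simps power2_eq_square)

lemma energy: "1/2 * ((Rho s)^2 + (c / R s)^2) - 1 / R s - \<beta> / (R s)^2 = h"
proof -
  have hh: "h = 1 / (2 * a)" using h a by (simp add: field_simps)
  have "(Rho s)^2 = a * e^2 * sinh s ^ 2 / R s ^ 2"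
    unfolding Rho_def by (simp add: power_divide power_mult_distrib sa(2))
  also have "a * e^2 * sinh s ^ 2 = a * (e^2 * cosh s ^2 - e^2)"
    by (simp add: cosh_square_eq algebra_simps)
  finally have r2: "(Rho s)^2 = a * (e^2 * cosh s ^2 - e^2) / R s ^ 2" .
  have c2: "c^2 = a * (e^2 - 1) + 2 * \<beta>" using cb by simp
  define E where "E = e * cosh s"
  have RE: "R s = a * (E - 1)" unfolding R_def E_def by simp
  have E1: "E > 1" unfolding E_def by (rule ecosh)
  have "(Rho s)^2 + (c / R s)^2 = (a * (E^2 - 1) + 2 * \<beta>) / R s ^ 2"
    unfolding r2 E_def using Rpos[of s] by (simp add: c2 power_divide add_divide_distrib[symmetric] power_mult_distrib algebra_simps)
  then have "1/2 * ((Rho s)^2 + (c / R s)^2) - 1 / R s - \<beta> / (R s)^2 = 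
      1/2 * ((a * (E^2 - 1) + 2 * \<beta>) / R s ^ 2) - 1 / R s - \<beta> / (R s)^2" by simp
  also have "\<dots> = a * (E^2 - 1) / (2 * R s ^ 2) - 1 / R s"
    using Rpos[of s] by (simp add: field_simps)
  also have "a * (E^2 - 1) = R s * (E + 1)" unfolding RE by (simp add: algebra_simps power2_eq_square)
  also have "R s * (E + 1) / (2 * R s ^ 2) - 1 / R s = (E - 1) / (2 * R s)"
    using Rpos[of s] by (simp add: field_simps power2_eq_square)
  also have "\<dots> = h" unfolding RE hh using E1 a by (simp add: field_simps)
  finally show ?thesis .
qed

end


lemma choose_e:
  fixes a L \<beta> C :: real
  assumes a: "a > 0" and L: "L > 0" and b: "\<beta> > 0" and C: "C = 1 + L / a"
  defines "F \<equiv> \<lambda>e. 2 * (sqrt (a * (e^2 - 1) + 2 * \<beta>) / sqrt (a * (e^2 - 1)))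
                  * arctan (sqrt ((e + 1) / (e - 1)) * sqrt ((C - e) / (C + e)))"
  shows "\<exists>e. 1 < e \<and> e < C \<and> F e = pi"
proof -
  define el where "el = sqrt (min C (1 + 2 * \<beta> / (3 * a)))"
  have C1: "C > 1" using C a L by simp
  have m1: "min C (1 + 2 * \<beta> / (3 * a)) > 1" using C1 a b by simp
  have el1: "el > 1" unfolding el_def using m1 by simp
  have el2: "el^2 \<le> C" "el^2 \<le> 1 + 2 * \<beta> / (3 * a)" unfolding el_def using m1 by auto
  have elC: "el < C"
  proof -
    have "el < el^2" using el1 by (simp add: power2_eq_square)
    then show ?thesis using el2 by linarith
  qed
  have cont: "continuous_on {el..C} F"
    unfolding F_def
  proof (intro continuous_intros ballI)
    fix x assume x: "x \<in> {el..C}"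
    then have "x > 1" using el1 by auto
    then have "x^2 > 1" by (simp add: one_less_power)
    then show "sqrt (a * (x^2 - 1)) \<noteq> 0" using a by simp
    show "x - 1 \<noteq> 0" using \<open>x > 1\<close> by simp
    show "C + x \<noteq> 0" using \<open>x > 1\<close> C1 by simp
  qed
  have FC: "F C = 0" unfolding F_def by simp
  have Fel: "F el \<ge> pi"
  proof -
    define X where "X = a * (el^2 - 1)"
    have X0: "X > 0" unfolding X_def using a el1 by (simp add: one_less_power)
    have X3: "3 * X \<le> 2 * \<beta>" unfolding X_def using el2(2) a by (simp add: field_simps)
    have "sqrt (4 * X) \<le> sqrt (X + 2 * \<beta>)" using X3 by simp
    then have "2 * sqrt X \<le> sqrt (X + 2 * \<beta>)" by (simp add: real_sqrt_mult)
    then have q1: "2 \<le> sqrt (X + 2 * \<beta>) / sqrt X" using X0 by (simp add: field_simps)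
    have "(el - 1) * (C + el) \<le> (el + 1) * (C - el)" using el2(1) by (simp add: algebra_simps power2_eq_square)
    moreover have "(el - 1) * (C + el) > 0" using el1 C1 by simp
    ultimately have "1 \<le> ((el + 1) * (C - el)) / ((el - 1) * (C + el))"
      by (simp add: le_divide_eq_1_pos)
    then have "1 \<le> ((el + 1) / (el - 1)) * ((C - el) / (C + el))"
      by (simp add: times_divide_times_eq)
    then have "1 \<le> sqrt ((el + 1) / (el - 1)) * sqrt ((C - el) / (C + el))"
      by (metis real_sqrt_le_mono real_sqrt_mult real_sqrt_one)
    then have q2: "pi / 4 \<le> arctan (sqrt ((el + 1) / (el - 1)) * sqrt ((C - el) / (C + el)))"
      by (metis arctan_le_iff arctan_one)
    have "pi = 2 * (2 * (pi / 4))" by simp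
    also have "\<dots> \<le> 2 * (sqrt (X + 2 * \<beta>) / sqrt X * arctan (sqrt ((el + 1) / (el - 1)) * sqrt ((C - el) / (C + el))))"
      using q1 q2 by (intro mult_left_mono mult_mono) auto
    finally show ?thesis unfolding F_def X_def by simp
  qed
  obtain e where e: "el \<le> e" "e \<le> C" "F e = pi"
    using IVT2'[of F C pi el] FC Fel elC cont by force
  have "e \<noteq> C" using e FC by auto
  then show ?thesis using e el1 by (intro exI[of _ e]) auto
qed



lemma nE: "cmod (complex_of_real (cos x) + \<i> * complex_of_real (sin x)) = 1"
  by (simp add: cmod_def)

lemma ang1:
  assumes "Re z > 0" shows "vec_angle z 1 < pi / 2"
proof -
  have z: "cmod z > 0" using assms by (metis complex_Re_le_cmod less_le_trans)
  define x where "x = Re z / cmod z"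
  have x: "0 < x" "x \<le> 1" unfolding x_def using z assms complex_Re_le_cmod[of z] by auto
  have "arccos x < arccos 0" by (rule arccos_less_arccos) (use x in auto)
  moreover have "z \<bullet> 1 / (norm z * norm (1::complex)) = x" unfolding x_def by (simp add: inner_complex_def)
  ultimately show ?thesis unfolding vec_angle_def by simp
qed

lemma ang2:
  assumes "Re z > 0" shows "vec_angle (-1) z > pi / 2"
proof -
  have z: "cmod z > 0" using assms by (metis complex_Re_le_cmod less_le_trans)
  define x where "x = - Re z / cmod z"
  have x: "x < 0" "-1 \<le> x" unfolding x_def using z assms complex_Re_le_cmod[of z] by (auto simp: field_simps)
  have "arccos 0 < arccos x" by (rule arccos_less_arccos) (use x in auto)
  moreover have "(-1) \<bullet> z / (norm (-1::complex) * norm z) = x" unfolding x_def by (simp add: inner_complex_def)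
  ultimately show ?thesis unfolding vec_angle_def by simp
qed

lemma wind:
  fixes r th :: "real \<Rightarrow> real" and T :: real and Z :: "real \<Rightarrow> complex"
  assumes rc: "continuous_on UNIV r" and thc: "continuous_on UNIV th"
    and rpos: "\<And>t. r t > 0" and T: "T > 0" and rT: "r T = r 0" and thT: "th T = th 0 + 2 * pi"
    and Zdef: "Z = (\<lambda>t. \<i> * of_real (r t) * (of_real (cos (th t)) + \<i> * of_real (sin (th t))))"
  shows "Ind Z 0 T = 1"
proof -
  define p where "p = (\<lambda>s. Z (0 + (T - 0) * s))"
  define q where "q = (\<lambda>u. complex_of_real (ln (r (T * u))) + \<i> * complex_of_real (th (T * u) + pi / 2))"
  have ZT: "Z T = Z 0" unfolding Zdef using rT thT by (simp add: sin_add cos_add)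
  have pq: "p = exp \<circ> q"
  proof
    fix u
    show "p u = (exp \<circ> q) u"
      unfolding p_def q_def Zdef using rpos[of "T * u"]
      by (simp add: complex_eq_iff Re_exp Im_exp cos_add sin_add)
  qed
  have c1: "continuous_on {0..1} (\<lambda>u. r (T * u))"
    by (rule continuous_on_compose2[OF rc]) (auto intro!: continuous_intros)
  have c2: "continuous_on {0..1} (\<lambda>u. th (T * u))"
    by (rule continuous_on_compose2[OF thc]) (auto intro!: continuous_intros)
  have rnz: "\<And>t. r t \<noteq> 0" using rpos by (metis less_irrefl)
  have pathq: "path q" unfolding path_def q_def
    by (auto intro!: continuous_intros c1 c2 simp: rnz)
  have pathp: "path p" unfolding pq by (intro path_continuous_image pathq continuous_intros)
  have p0: "0 \<notin> path_image p" unfolding pq path_image_def by auto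
  have "cmod (Z 0) = r 0" unfolding Zdef using rpos[of 0] by (simp add: norm_mult nE)
  then have Z0: "Z 0 \<noteq> 0" using rpos[of 0] by auto
  have "winding_number p 0 = (pathfinish q - pathstart q) / (2 * of_real pi * \<i>)"
    unfolding pq by (rule winding_number_compose_exp[OF pathq])
  also have "\<dots> = 1"
    unfolding pathfinish_def pathstart_def q_def using rT thT by (simp add: field_simps)
  finally have wp: "winding_number p 0 = 1" .
  have "Ind Z 0 T = winding_number (p +++ linepath (Z T) (Z 0)) 0"
    unfolding Ind_def p_def by simp
  also have "\<dots> = winding_number p 0 + winding_number (linepath (Z T) (Z 0)) 0"
    by (rule winding_number_join) (use pathp p0 ZT Z0 in \<open>auto simp: p_def pathfinish_def\<close>)
  also have "\<dots> = 1" using wp ZT Z0 by simp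
  finally show ?thesis .
qed


theorem lemma2p2:
  fixes L h \<beta> :: real
  assumes "L > 0" "h > 0" "\<beta> > 0"
  shows "\<exists>Z Z' Z'' :: real \<Rightarrow> complex. \<exists>T :: real.
     (\<forall>t. Z t \<noteq> 0) \<and>
     (\<forall>t. (Z has_vector_derivative Z' t) (at t)) \<and>
     (\<forall>t. (Z' has_vector_derivative Z'' t) (at t)) \<and>
     (\<forall>t. (V_beta \<beta> has_derivative (\<lambda>v. (- Z'' t) \<bullet> v)) (at (Z t))) \<and>
     (\<forall>t. (1/2) * (norm (Z' t))\<^sup>2 + V_beta \<beta> (Z t) = h) \<and>
     T > 0 \<and> Z 0 \<in> line_ell L \<and> Z T \<in> line_ell L \<and>
     (\<forall>t\<in>{0<..<T}. Z t \<in> halfplane_P L) \<and>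
     vec_angle (Z' 0) 1 < pi / 2 \<and>
     vec_angle (-1) (Z' T) > pi / 2 \<and>
     Ind Z 0 T = 1"
proof -
  define a where "a = 1 / (2 * h)"
  have a: "a > 0" using assms by (simp add: a_def)
  define sa where "sa = sqrt a"
  have sa: "sa > 0" "sa^2 = a" using a by (auto simp: sa_def)
  define C where "C = 1 + L / a"
  obtain e where e1: "1 < e" and eC: "e < C" and Fe: "2 * (sqrt (a * (e^2 - 1) + 2 * \<beta>) / sqrt (a * (e^2 - 1)))
                  * arctan (sqrt ((e + 1) / (e - 1)) * sqrt ((C - e) / (C + e))) = pi"
    using choose_e[OF a assms(1) assms(3) C_def] by blast
  define k where "k = sqrt ((e + 1) / (e - 1))"
  define c where "c = sqrt (a * (e^2 - 1) + 2 * \<beta>)"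
  define ct where "ct = sqrt (a * (e^2 - 1))"
  define m where "m = 2 * c / ct"
  have e2: "e^2 > 1" using e1 by (simp add: one_less_power)
  have k: "k > 0" "k^2 * (e - 1) = e + 1" using e1 by (auto simp: k_def)
  have ct: "ct > 0" using a e2 by (simp add: ct_def)
  have c: "c > 0" using a e2 assms(3) by (simp add: c_def add_pos_pos)
  have cb: "c^2 - 2 * \<beta> = a * (e^2 - 1)" using a e2 assms(3) by (simp add: c_def)
  have kct: "k * (e - 1) * sa = ct"
  proof -
    have "(k * (e - 1) * sa)^2 = (k^2 * (e - 1)) * (e - 1) * sa^2"
      by (simp add: power_mult_distrib power2_eq_square)
    also have "\<dots> = a * (e^2 - 1)" unfolding k(2) sa(2) by (simp add: algebra_simps power2_eq_square)
    finally have "ct = sqrt ((k * (e - 1) * sa)^2)" unfolding ct_def by simp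
    then show ?thesis using k e1 sa by simp
  qed
  have m: "m * k * (e - 1) * sa = 2 * c"
  proof -
    have "m * k * (e - 1) * sa = m * (k * (e - 1) * sa)" by simp
    also have "\<dots> = 2 * c" unfolding kct m_def using ct by simp
    finally show ?thesis .
  qed
  have hh: "2 * h * a = 1" using assms by (simp add: a_def)
  interpret O: orbit a sa e k c m \<beta> h
    by unfold_locales (use a sa e1 k c m cb hh in auto)
  define A where "A = sa * a"
  have A: "A > 0" using a sa by (simp add: A_def)
  define tau where "tau = (\<lambda>s. A * (e * sinh s - s))"
  note KT = kepler_time[OF A e1 tau_def]
  define \<sigma> where "\<sigma> = inv tau"
  have Ce: "C / e \<ge> 1" using e1 eC by simp
  define s1 where "s1 = arcosh (C / e)"
  have s1c: "cosh s1 = C / e" unfolding s1_def using Ce by simp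
  have s1p: "s1 > 0" unfolding s1_def using e1 eC by simp
  have Rs1: "O.R s1 = L" unfolding O.R_def s1c using e1 a by (simp add: C_def)
  have Rm: "O.R (- s1) = L" using Rs1 unfolding O.R_def by simp
  have Ths1: "O.Th s1 = pi"
  proof -
    define x where "x = C / e"
    have x: "x > 1" unfolding x_def using e1 eC by simp
    have sh: "sinh s1 = sqrt (x^2 - 1)" unfolding s1_def x_def using Ce by (simp add: sinh_arcosh_real)
    have "sinh s1 / (cosh s1 + 1) = sqrt ((x^2 - 1) / (x + 1)^2)"
      unfolding sh s1c x_def[symmetric] using x by (simp add: real_sqrt_divide)
    also have "(x^2 - 1) / (x + 1)^2 = ((x - 1) * (x + 1)) / ((x + 1) * (x + 1))"
      by (simp add: power2_eq_square algebra_simps)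
    also have "\<dots> = (x - 1) / (x + 1)"
      using x by simp
    also have "(x - 1) / (x + 1) = (C - e) / (C + e)"
    proof -
      have ne: "C + e \<noteq> 0" "e \<noteq> 0" using e1 eC by auto
      show ?thesis unfolding x_def using ne by (simp add: divide_simps)
    qed
    finally have q: "sinh s1 / (cosh s1 + 1) = sqrt ((C - e) / (C + e))" .
    have "O.Th s1 = m * arctan (k * sqrt ((C - e) / (C + e)))"
      unfolding O.Th_def using q by (simp add: times_divide_eq_right[symmetric] del: times_divide_eq_right)
    also have "\<dots> = pi" using Fe unfolding m_def k_def c_def[symmetric] ct_def[symmetric] by simp
    finally show ?thesis .
  qed
  have Thm: "O.Th (- s1) = - pi" using Ths1 unfolding O.Th_def by (simp add: arctan_minus)
  define \<tau>1 where "\<tau>1 = tau s1"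
  have tau0: "tau 0 = 0" unfolding tau_def by simp
  have \<tau>1: "\<tau>1 > 0" using strict_monoD[OF KT(1) s1p] tau0 unfolding \<tau>1_def by simp
  define T where "T = 2 * \<tau>1"
  have T: "T > 0" using \<tau>1 by (simp add: T_def)
  have m0: "0 - \<tau>1 = tau (- s1)" unfolding \<tau>1_def using KT(7)[of s1] by simp
  have \<sigma>0: "\<sigma> (0 - \<tau>1) = - s1" unfolding \<sigma>_def m0 by (rule KT(6))
  have mT: "T - \<tau>1 = tau s1" unfolding T_def \<tau>1_def by simp
  have \<sigma>T: "\<sigma> (T - \<tau>1) = s1" unfolding \<sigma>_def mT by (rule KT(6))
  have dsig: "((\<lambda>t. \<sigma> (t - \<tau>1)) has_real_derivative 1 / (sa * O.R (\<sigma> (t - \<tau>1)))) (at t)" for t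
  proof -
    have "(\<sigma> has_real_derivative 1 / (A * (e * cosh (\<sigma> (t - \<tau>1)) - 1))) (at (t - \<tau>1))"
      unfolding \<sigma>_def by (rule KT(4))
    moreover have "A * (e * cosh (\<sigma> (t - \<tau>1)) - 1) = sa * O.R (\<sigma> (t - \<tau>1))"
      unfolding A_def O.R_def by simp
    ultimately have "(\<sigma> has_real_derivative 1 / (sa * O.R (\<sigma> (t - \<tau>1)))) (at (t - \<tau>1))" by simp
    moreover have d2: "((\<lambda>t. t - \<tau>1) has_real_derivative 1) (at t)"
      by (auto intro!: derivative_eq_intros)
    ultimately show ?thesis using DERIV_chain2[where f=\<sigma> and g="\<lambda>t. t - \<tau>1"] by fastforce
  qed
  have chain: "((\<lambda>t. f (\<sigma> (t - \<tau>1))) has_real_derivative f' (\<sigma> (t - \<tau>1)) * (1 / (sa * O.R (\<sigma> (t - \<tau>1))))) (at t)"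
    if "\<And>s. (f has_real_derivative f' s) (at s)" for f f' t
    using DERIV_chain2[where f=f and g="\<lambda>t. \<sigma> (t - \<tau>1)", OF that dsig] by simp
  define r where "r = (\<lambda>t. O.R (\<sigma> (t - \<tau>1)))"
  define rho where "rho = (\<lambda>t. O.Rho (\<sigma> (t - \<tau>1)))"
  define th where "th = (\<lambda>t. O.Th (\<sigma> (t - \<tau>1)))"
  have rpos: "\<And>t. r t > 0" unfolding r_def by (rule O.Rpos)
  have dr: "\<And>t. (r has_real_derivative rho t) (at t)"
    unfolding r_def rho_def using chain[OF O.R_deriv] O.id1 by simp
  have drho: "\<And>t. (rho has_real_derivative ((c^2 - 2*\<beta>)/r t^3 - 1/r t^2)) (at t)"
    unfolding r_def rho_def using chain[OF O.Rho_deriv] O.id2 by simp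
  have dth: "\<And>t. (th has_real_derivative (c / r t^2)) (at t)"
    unfolding r_def th_def using chain[OF O.Th_deriv] O.id3 by simp
  have en: "\<And>t. 1/2 * ((rho t)^2 + (c / r t)^2) - 1 / r t - \<beta> / (r t)^2 = h"
    unfolding r_def rho_def by (rule O.energy)
  define E where "E = (\<lambda>t. complex_of_real (cos (th t)) + \<i> * complex_of_real (sin (th t)))"
  define Z where "Z = (\<lambda>t. \<i> * of_real (r t) * (of_real (cos (th t)) + \<i> * of_real (sin (th t))))"
  define Z' where "Z' = (\<lambda>t. \<i> * (of_real (rho t) + \<i> * of_real (c / r t)) * (of_real (cos (th t)) + \<i> * of_real (sin (th t))))"
  define Z'' where "Z'' = (\<lambda>t. - \<i> * of_real (1/r t^2 + 2*\<beta>/r t^3) * (of_real (cos (th t)) + \<i> * of_real (sin (th t))))"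
  note PO = polar_ode[OF rpos dr drho dth]
  have nZ: "norm (Z t) = r t" for t unfolding Z_def using rpos[of t] by (simp add: norm_mult nE)
  have Znz: "\<forall>t. Z t \<noteq> 0" using nZ rpos by (metis less_irrefl norm_zero)
  have D1: "\<forall>t. (Z has_vector_derivative Z' t) (at t)" unfolding Z_def Z'_def using PO(1) by blast
  have D2: "\<forall>t. (Z' has_vector_derivative Z'' t) (at t)" unfolding Z''_def Z'_def using PO(2) by blast
  have D3: "\<forall>t. (V_beta \<beta> has_derivative (\<lambda>v. (- Z'' t) \<bullet> v)) (at (Z t))"
  proof
    fix t
    have eq: "complex_of_real (1 / norm (Z t) ^ 3 + 2 * \<beta> / norm (Z t) ^ 4) * Z t = - Z'' t"
    proof -
      define X where "X = 1 / r t ^ 3 + 2 * \<beta> / r t ^ 4"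
      define Y where "Y = 1 / r t ^ 2 + 2 * \<beta> / r t ^ 3"
      define EE where "EE = complex_of_real (cos (th t)) + \<i> * complex_of_real (sin (th t))"
      have XY: "X * r t = Y"
        unfolding X_def Y_def using rpos[of t] by (simp add: field_simps power2_eq_square power3_eq_cube eval_nat_numeral)
      have "complex_of_real X * Z t = \<i> * (complex_of_real X * complex_of_real (r t)) * EE"
        unfolding Z_def EE_def by (simp only: mult_ac)
      also have "\<dots> = \<i> * complex_of_real Y * EE" unfolding XY[symmetric] by simp
      also have "\<dots> = - Z'' t" unfolding Z''_def EE_def Y_def by simp
      finally show ?thesis unfolding nZ X_def .
    qed
    show "(V_beta \<beta> has_derivative (\<lambda>v. (- Z'' t) \<bullet> v)) (at (Z t))"
      using V_deriv[OF Znz[rule_format, of t], of \<beta>] unfolding eq .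
  qed
  have D4: "\<forall>t. (1/2) * (norm (Z' t))\<^sup>2 + V_beta \<beta> (Z t) = h"
  proof
    fix t
    have "norm (Z' t) = cmod (of_real (rho t) + \<i> * of_real (c / r t))"
      unfolding Z'_def by (simp only: norm_mult nE norm_ii mult_1_left mult_1_right)
    then have "norm (Z' t) ^ 2 = (rho t)^2 + (c / r t)^2"
      by (simp add: cmod_power2)
    moreover have "V_beta \<beta> (Z t) = - 1 / r t - \<beta> / (r t)^2" unfolding V_beta_def nZ ..
    ultimately show "(1/2) * (norm (Z' t))\<^sup>2 + V_beta \<beta> (Z t) = h" using en[of t] by simp
  qed
  have r0: "r 0 = L" "th 0 = - pi" unfolding r_def th_def \<sigma>0 using Rm Thm by auto
  have rT: "r T = L" "th T = pi" unfolding r_def th_def \<sigma>T using Rs1 Ths1 by auto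
  have Z0: "Z 0 = - \<i> * of_real L" unfolding Z_def r0 by simp
  have ZT: "Z T = - \<i> * of_real L" unfolding Z_def rT by simp
  have ell: "Z 0 \<in> line_ell L" "Z T \<in> line_ell L" unfolding line_ell_def Z0 ZT by auto
  have half: "\<forall>t\<in>{0<..<T}. Z t \<in> halfplane_P L"
  proof
    fix t assume t: "t \<in> {0<..<T}"
    define s where "s = \<sigma> (t - \<tau>1)"
    have ts: "tau s = t - \<tau>1" unfolding s_def \<sigma>_def using KT(5) by simp
    have "s < s1"
    proof (rule ccontr)
      assume "\<not> s < s1"
      then have "tau s1 \<le> tau s" using KT(1) by (simp add: strict_mono_less_eq)
      then show False using ts t unfolding \<tau>1_def T_def by simp
    qed
    moreover have "- s1 < s"
    proof (rule ccontr)
      assume "\<not> - s1 < s"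
      then have "tau s \<le> tau (- s1)" using KT(1) by (simp add: strict_mono_less_eq)
      then show False using ts t KT(7)[of s1] unfolding \<tau>1_def T_def by simp
    qed
    ultimately have "\<bar>s\<bar> < s1" by auto
    then have "cosh \<bar>s\<bar> < cosh s1" using cosh_real_nonneg_less_iff[of "\<bar>s\<bar>" s1] s1p by simp
    then have "cosh s < cosh s1" by simp
    then have "O.R s < O.R s1" unfolding O.R_def using a e1 by simp
    then have rl: "r t < L" unfolding r_def s_def[symmetric] Rs1 .
    have "r t * (-1) \<le> r t * cos (th t)" using rpos[of t] by (intro mult_left_mono) auto
    then have "Im (Z t) > - L" unfolding Z_def using rl by simp
    then show "Z t \<in> halfplane_P L" unfolding halfplane_P_def by simp
  qed
  have Z'0: "Re (Z' 0) = c / L" unfolding Z'_def r0 by simp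
  have Z'T: "Re (Z' T) = c / L" unfolding Z'_def rT by simp
  have cL: "c / L > 0" using c assms by simp
  have A1: "vec_angle (Z' 0) 1 < pi / 2" using ang1 Z'0 cL by simp
  have A2: "vec_angle (-1) (Z' T) > pi / 2" using ang2 Z'T cL by simp
  have rc: "continuous_on UNIV r" using dr by (intro continuous_at_imp_continuous_on) (auto intro: DERIV_isCont)
  have thc: "continuous_on UNIV th" using dth by (intro continuous_at_imp_continuous_on) (auto intro: DERIV_isCont)
  have W: "Ind Z 0 T = 1"
    by (rule wind[OF rc thc rpos T]) (use r0 rT Z_def in auto)
  show ?thesis
    apply (rule exI[of _ Z], rule exI[of _ Z'], rule exI[of _ Z''], rule exI[of _ T])
    using Znz D1 D2 D3 D4 T ell half A1 A2 W by blast
qed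

end
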